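(* Let $f:\mathbb{R}^d \to \mathbb{R}$ be concave, with hypograph $f^- = \{(u;z) \in \mathbb{R}^{d+1} : z \leq f(u)\}$. Let $x \in f^-$ and $\lambda \geq 0$. Then for all $y \in M^{\lambda}_{f^-}(x)$ with $y \in f^-$, $$(1 - \lambda)\cdot \mathrm{ray}_{f^-}(x) \leq \mathrm{ray}_{f^-}(y) \leq (1 + \lambda)\cdot \mathrm{ray}_{f^-}(x).$$
   Context: For a point $w = (u;z) \in f^-$, the ray distance $\mathrm{ray}_{f^-}(w) = f(u) - z$ is the length of the segment from $w$ vertically upward (in the direction of the last coordinate) to the boundary of $f^-$. For a convex set $K$, $p \in K$ and $\lambda \geq 0$, the $\lambda$-scaled Macbeath region is $M^{\lambda}_K(p) = p + \lambda\big((K - p) \cap (p - K)\big)$. *)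

theory Defs
  imports "HOL-Analysis.Analysis"
begin

text \<open>Points of R^(d+1) are represented as pairs (u, z) with u in R^d and z in R.\<close>

definition hypo :: "((real^'n) \<Rightarrow> real) \<Rightarrow> ((real^'n) \<times> real) set"
  where "hypo f = {w. snd w \<le> f (fst w)}"

definition ray_dist :: "((real^'n) \<Rightarrow> real) \<Rightarrow> (real^'n) \<times> real \<Rightarrow> real"
  where "ray_dist f w = f (fst w) - snd w"

definition macbeath :: "'a::real_vector set \<Rightarrow> real \<Rightarrow> 'a \<Rightarrow> 'a set"
  where "macbeath K lam p =
     (\<lambda>q. p + lam *\<^sub>R q) ` ((\<lambda>k. k - p) ` K \<inter> (\<lambda>k. p - k) ` K)"

end

theory Submission
  imports Defs
begin

theorem lemma10:
  fixes f :: "real^'n \<Rightarrow> real" and x y :: "(real^'n) \<times> real" and lam :: real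
  assumes "concave_on UNIV f"
    and "x \<in> hypo f"
    and "lam \<ge> 0"
    and "y \<in> macbeath (hypo f) lam x"
    and "y \<in> hypo f"
  shows "(1 - lam) * ray_dist f x \<le> ray_dist f y \<and> ray_dist f y \<le> (1 + lam) * ray_dist f x"
proof -
  obtain q where q1: "x + q \<in> hypo f" and q2: "x - q \<in> hypo f" and yq: "y = x + lam *\<^sub>R q"
  proof -
    from assms(4) obtain q where qa: "q \<in> (\<lambda>k. k - x) ` hypo f" and qb: "q \<in> (\<lambda>k. x - k) ` hypo f"
      and yq: "y = x + lam *\<^sub>R q" unfolding macbeath_def by blast
    from qa obtain k1 where "k1 \<in> hypo f" "q = k1 - x" by blast
    hence "x + q \<in> hypo f" by simp
    moreover from qb obtain k2 where "k2 \<in> hypo f" "q = x - k2" by blast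
    hence "x - q \<in> hypo f" by simp
    ultimately show ?thesis using that yq by blast
  qed
  obtain u z where x: "x = (u, z)" by (cases x)
  obtain v t where q: "q = (v, t)" by (cases q)
  have h1: "z + t \<le> f (u + v)" using q1 by (simp add: hypo_def x q)
  have h2: "z - t \<le> f (u - v)" using q2 by (simp add: hypo_def x q)
  have h0: "z \<le> f u" using assms(2) by (simp add: hypo_def x)
  have hy: "z + lam * t \<le> f (u + lam *\<^sub>R v)" using assms(5) by (simp add: hypo_def x q yq)
  have ry: "ray_dist f y = f (u + lam *\<^sub>R v) - z - lam * t"
    by (simp add: ray_dist_def yq x q)
  have rx: "ray_dist f x = f u - z" by (simp add: ray_dist_def x)
  have up: "ray_dist f y \<le> (1 + lam) * ray_dist f x"
  proof -
    define s where "s = lam / (1 + lam)"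
    have s0: "0 \<le> s" "s \<le> 1" using assms(3) by (auto simp: s_def field_simps)
    have "(1 - s) *\<^sub>R (u + lam *\<^sub>R v) + s *\<^sub>R (u - v) = u"
    proof -
      have "1 - s = 1 / (1 + lam)" using assms(3) by (simp add: s_def field_simps)
      moreover have "s *\<^sub>R (u - v) = (1 / (1 + lam)) *\<^sub>R (lam *\<^sub>R (u - v))"
        by (simp add: s_def)
      ultimately have "(1 - s) *\<^sub>R (u + lam *\<^sub>R v) + s *\<^sub>R (u - v)
          = (1 / (1 + lam)) *\<^sub>R ((u + lam *\<^sub>R v) + lam *\<^sub>R (u - v))"
        by (simp only: scaleR_add_right)
      also have "(u + lam *\<^sub>R v) + lam *\<^sub>R (u - v) = (1 + lam) *\<^sub>R u"
        by (simp add: algebra_simps)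
      finally show ?thesis using assms(3) by simp
    qed
    hence "f u \<ge> (1 - s) * f (u + lam *\<^sub>R v) + s * f (u - v)"
      using concave_onD[OF assms(1) s0] by (metis UNIV_I)
    moreover have "(1 - s) * f (u + lam *\<^sub>R v) + s * f (u - v)
        = (f (u + lam *\<^sub>R v) + lam * f (u - v)) / (1 + lam)"
    proof -
      have "1 - s = 1 / (1 + lam)" using assms(3) by (simp add: s_def field_simps)
      thus ?thesis by (simp add: s_def add_divide_distrib)
    qed
    ultimately have "(f (u + lam *\<^sub>R v) + lam * f (u - v)) / (1 + lam) \<le> f u" by simp
    hence "(1 + lam) * f u \<ge> f (u + lam *\<^sub>R v) + lam * f (u - v)"
      using assms(3) by (simp add: pos_divide_le_eq mult.commute)
    moreover have "lam * (z - t) \<le> lam * f (u - v)" using h2 assms(3) by (simp add: mult_left_mono)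
    ultimately show ?thesis unfolding ry rx by (simp add: algebra_simps)
  qed
  have lo: "(1 - lam) * ray_dist f x \<le> ray_dist f y"
  proof (cases "lam \<le> 1")
    case True
    have "(1 - lam) *\<^sub>R u + lam *\<^sub>R (u + v) = u + lam *\<^sub>R v" by (simp add: algebra_simps)
    hence "f (u + lam *\<^sub>R v) \<ge> (1 - lam) * f u + lam * f (u + v)"
      using concave_onD[OF assms(1) assms(3) True] by (metis UNIV_I)
    moreover have "lam * (z + t) \<le> lam * f (u + v)" using h1 assms(3) by (simp add: mult_left_mono)
    ultimately show ?thesis unfolding ry rx by (simp add: algebra_simps)
  next
    case False
    have "(1 - lam) * ray_dist f x \<le> 0" using False h0 rx by (simp add: mult_nonpos_nonneg)
    moreover have "0 \<le> ray_dist f y" using hy ry by simp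
    ultimately show ?thesis by linarith
  qed
  show ?thesis using up lo by simp
qed

end
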